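(* The map $\alpha\mapsto\mathsf{dark}(\alpha)$ is a bijection from the set of snowy weak compositions to the set $\mathsf{Rook}_+$ of non-attacking rook diagrams. Its inverse sends $R\in\mathsf{Rook}_+$ to the weak composition $\alpha$ with $\alpha_r=0$ if row $r$ of $R$ is empty and $\alpha_r=c$ if $(r,c)\in R$.
   Context: A weak composition is an infinite sequence of nonnegative integers with finitely many positive entries; it is snowy if its positive entries are distinct. A diagram is a finite subset of $\mathbb{Z}_{>0}^2$ ($(r,c)$ in row $r$, row 1 on top, column $c$); it is a non-attacking rook diagram if it has at most one cell in each row and each column. $D(\alpha)=\{(r,c):1\le c\le\alpha_r\}$. For a diagram $D$, $\mathsf{snow}(D)$ is built by iterating through rows from bottom to top: in row $r$ take the rightmost cell $(r,c)\in D$ such that column $c$ contains no dark cloud yet; if it exists label it a dark cloud and add snowflake cells at $(r',c)$ for all $r'<r$ with $(r',c)\notin D$. $\mathsf{dark}(\alpha)$ is the set of dark clouds of $\mathsf{snow}(D(\alpha))$. *)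

theory Defs
  imports Main
begin

type_synonym diagram = "(nat \<times> nat) set"

text \<open>Weak compositions: sequences alpha_1, alpha_2, ... of naturals, represented as
  functions nat => nat; index 0 is unused and fixed to 0.\<close>
definition weak_comp :: "(nat \<Rightarrow> nat) \<Rightarrow> bool" where
  "weak_comp \<alpha> \<longleftrightarrow> \<alpha> 0 = 0 \<and> finite {r. 0 < \<alpha> r}"

definition snowy :: "(nat \<Rightarrow> nat) \<Rightarrow> bool" where
  "snowy \<alpha> \<longleftrightarrow> weak_comp \<alpha> \<and> inj_on \<alpha> {r. 0 < \<alpha> r}"

definition is_diagram :: "diagram \<Rightarrow> bool" where
  "is_diagram D \<longleftrightarrow> finite D \<and> (\<forall>(r,c)\<in>D. 0 < r \<and> 0 < c)"

definition rook_diagrams :: "diagram set" where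
  "rook_diagrams = {D. is_diagram D \<and>
     (\<forall>r c c'. (r,c) \<in> D \<longrightarrow> (r,c') \<in> D \<longrightarrow> c = c') \<and>
     (\<forall>r r' c. (r,c) \<in> D \<longrightarrow> (r',c) \<in> D \<longrightarrow> r = r')}"

definition diag :: "(nat \<Rightarrow> nat) \<Rightarrow> diagram" where
  "diag \<alpha> = {(r,c). 1 \<le> r \<and> 1 \<le> c \<and> c \<le> \<alpha> r}"

text \<open>Snowflakes never influence the choice of dark clouds, so only dark clouds are tracked.\<close>
definition dark_step :: "diagram \<Rightarrow> diagram \<Rightarrow> nat \<Rightarrow> diagram" where
  "dark_step D C r =
     (let cs = {c. (r,c) \<in> D \<and> c \<notin> snd ` C}
      in if cs = {} then C else insert (r, Max cs) C)"

definition max_row :: "diagram \<Rightarrow> nat" where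
  "max_row D = (if D = {} then 0 else Max (fst ` D))"

definition dark_clouds :: "diagram \<Rightarrow> diagram" where
  "dark_clouds D = foldl (dark_step D) {} (rev [1..<Suc (max_row D)])"

definition dark :: "(nat \<Rightarrow> nat) \<Rightarrow> diagram" where
  "dark \<alpha> = dark_clouds (diag \<alpha>)"

definition rook_to_comp :: "diagram \<Rightarrow> nat \<Rightarrow> nat" where
  "rook_to_comp R r = (if \<exists>c. (r,c) \<in> R then (THE c. (r,c) \<in> R) else 0)"

end

theory Submission
  imports Defs
begin

definition G :: "(nat \<Rightarrow> nat) \<Rightarrow> nat \<Rightarrow> diagram" where
  "G \<alpha> k = {(r, \<alpha> r) | r. k < r \<and> 0 < \<alpha> r}"

lemma step_G:
  assumes s: "snowy \<alpha>"
  shows "dark_step (diag \<alpha>) (G \<alpha> (Suc j)) (Suc j) = G \<alpha> j"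
proof -
  have inj: "inj_on \<alpha> {r. 0 < \<alpha> r}" using s by (simp add: snowy_def)
  define cs where "cs = {c. (Suc j, c) \<in> diag \<alpha> \<and> c \<notin> snd ` G \<alpha> (Suc j)}"
  show ?thesis
  proof (cases "\<alpha> (Suc j) = 0")
    case True
    then have "cs = {}" by (auto simp: cs_def diag_def)
    moreover have "G \<alpha> (Suc j) = G \<alpha> j" using True
      by (auto simp: G_def) (metis Suc_lessI neq0_conv)
    ultimately show ?thesis unfolding dark_step_def Let_def cs_def[symmetric] by simp
  next
    case False
    have notin: "\<alpha> (Suc j) \<notin> snd ` G \<alpha> (Suc j)"
    proof
      assume "\<alpha> (Suc j) \<in> snd ` G \<alpha> (Suc j)"
      then obtain r where "Suc j < r" "0 < \<alpha> r" "\<alpha> r = \<alpha> (Suc j)" by (auto simp: G_def)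
      with inj False show False by (metis inj_onD mem_Collect_eq less_irrefl neq0_conv)
    qed
    have mem: "\<alpha> (Suc j) \<in> cs" using notin False by (auto simp: cs_def diag_def)
    have sub: "cs \<subseteq> {..\<alpha> (Suc j)}" by (auto simp: cs_def diag_def)
    have fin: "finite cs" using sub finite_subset by blast
    have mx: "Max cs = \<alpha> (Suc j)"
      by (rule Max_eqI[OF fin]) (use sub mem in auto)
    have "insert (Suc j, \<alpha> (Suc j)) (G \<alpha> (Suc j)) = G \<alpha> j" using False
      by (auto simp: G_def) (metis Suc_lessI)
    moreover have "cs \<noteq> {}" using mem by auto
    ultimately show ?thesis using mx unfolding dark_step_def Let_def cs_def[symmetric] by simp
  qed
qed

lemma fold_G:
  assumes s: "snowy \<alpha>"
  shows "foldl (dark_step (diag \<alpha>)) (G \<alpha> k) (rev [1..<Suc k]) = G \<alpha> 0"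
proof (induction k)
  case 0
  then show ?case by simp
next
  case (Suc j)
  have "rev [1..<Suc (Suc j)] = Suc j # rev [1..<Suc j]" by simp
  then show ?case using Suc step_G[OF s] by simp
qed

lemma finite_diag:
  assumes "weak_comp \<alpha>"
  shows "finite (diag \<alpha>)"
proof -
  have "diag \<alpha> \<subseteq> (\<Union>r\<in>{r. 0 < \<alpha> r}. {r} \<times> {..\<alpha> r})"
    by (auto simp: diag_def)
  moreover have "finite (\<Union>r\<in>{r. 0 < \<alpha> r}. {r} \<times> {..\<alpha> r})"
    using assms by (auto simp: weak_comp_def)
  ultimately show ?thesis using finite_subset by blast
qed

lemma dark_eq:
  assumes s: "snowy \<alpha>"
  shows "dark \<alpha> = {(r, \<alpha> r) | r. 0 < \<alpha> r}"
proof -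
  have wc: "weak_comp \<alpha>" using s by (simp add: snowy_def)
  have a0: "\<alpha> 0 = 0" using wc by (simp add: weak_comp_def)
  define m where "m = max_row (diag \<alpha>)"
  have big: "\<alpha> r = 0" if "m < r" for r
  proof (rule ccontr)
    assume "\<alpha> r \<noteq> 0"
    then have "(r, 1) \<in> diag \<alpha>" using that by (auto simp: diag_def)
    then have "r \<le> Max (fst ` diag \<alpha>)" "diag \<alpha> \<noteq> {}"
      using finite_diag[OF wc] by (auto intro!: Max_ge simp: image_iff) force
    then show False using that by (simp add: m_def max_row_def)
  qed
  have "G \<alpha> m = {}" using big by (auto simp: G_def)
  then have "dark \<alpha> = foldl (dark_step (diag \<alpha>)) (G \<alpha> m) (rev [1..<Suc m])"
    by (simp add: dark_def dark_clouds_def m_def)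
  also have "\<dots> = G \<alpha> 0" by (rule fold_G[OF s])
  finally show ?thesis using a0 by (auto simp: G_def)
qed

lemma graph_rook:
  assumes s: "snowy \<alpha>"
  shows "{(r, \<alpha> r) | r. 0 < \<alpha> r} \<in> rook_diagrams"
proof -
  have wc: "weak_comp \<alpha>" and inj: "inj_on \<alpha> {r. 0 < \<alpha> r}" using s by (auto simp: snowy_def)
  have a0: "\<alpha> 0 = 0" and fs: "finite {r. 0 < \<alpha> r}" using wc by (auto simp: weak_comp_def)
  have "{(r, \<alpha> r) | r. 0 < \<alpha> r} = (\<lambda>r. (r, \<alpha> r)) ` {r. 0 < \<alpha> r}" by auto
  then have fin: "finite {(r, \<alpha> r) | r. 0 < \<alpha> r}" using fs by simp
  show ?thesis unfolding rook_diagrams_def is_diagram_def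
    using fin a0 inj by (auto simp: inj_on_def) (metis neq0_conv)
qed

lemma rtc_props:
  assumes R: "R \<in> rook_diagrams"
  shows "snowy (rook_to_comp R)" "{(r, rook_to_comp R r) | r. 0 < rook_to_comp R r} = R"
proof -
  have pos: "\<And>r c. (r,c) \<in> R \<Longrightarrow> 0 < r \<and> 0 < c" and fin: "finite R"
    using R by (auto simp: rook_diagrams_def is_diagram_def)
  have row: "\<And>r c c'. (r,c) \<in> R \<Longrightarrow> (r,c') \<in> R \<Longrightarrow> c = c'"
   and col: "\<And>r r' c. (r,c) \<in> R \<Longrightarrow> (r',c) \<in> R \<Longrightarrow> r = r'"
    using R by (auto simp: rook_diagrams_def)
  have val: "rook_to_comp R r = c" if "(r,c) \<in> R" for r c
    using that row unfolding rook_to_comp_def by (auto intro!: the_equality)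
  have zero: "rook_to_comp R r = 0" if "\<not>(\<exists>c. (r,c) \<in> R)" for r
    using that by (simp add: rook_to_comp_def)
  have supp: "{r. 0 < rook_to_comp R r} = fst ` R"
  proof safe
    fix r assume "0 < rook_to_comp R r"
    then obtain c where "(r,c) \<in> R" using zero by fastforce
    then show "r \<in> fst ` R" by force
  next
    fix r c assume "(r,c) \<in> R"
    then show "0 < rook_to_comp R (fst (r,c))" using val pos by auto
  qed
  have "rook_to_comp R 0 = 0" using zero pos by blast
  moreover have "inj_on (rook_to_comp R) {r. 0 < rook_to_comp R r}"
    unfolding supp inj_on_def using val col by force
  ultimately show "snowy (rook_to_comp R)"
    using fin supp by (simp add: snowy_def weak_comp_def)
  show "{(r, rook_to_comp R r) | r. 0 < rook_to_comp R r} = R"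
  proof safe
    fix r assume "0 < rook_to_comp R r"
    then obtain c where "(r,c) \<in> R" using zero by fastforce
    then show "(r, rook_to_comp R r) \<in> R" using val by simp
  next
    fix r c assume "(r,c) \<in> R"
    then show "\<exists>r'. (r, c) = (r', rook_to_comp R r') \<and> 0 < rook_to_comp R r'"
      using val pos by auto
  qed
qed

theorem lemma4p20:
  shows "bij_betw dark {\<alpha>. snowy \<alpha>} rook_diagrams \<and>
         (\<forall>R\<in>rook_diagrams. the_inv_into {\<alpha>. snowy \<alpha>} dark R = rook_to_comp R)"
proof -
  have inj: "inj_on dark {\<alpha>. snowy \<alpha>}"
  proof (rule inj_onI)
    fix \<alpha> \<beta> assume a: "\<alpha> \<in> {\<alpha>. snowy \<alpha>}" and b: "\<beta> \<in> {\<alpha>. snowy \<alpha>}" and e: "dark \<alpha> = dark \<beta>"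
    then have g: "{(r, \<alpha> r) | r. 0 < \<alpha> r} = {(r, \<beta> r) | r. 0 < \<beta> r}"
      using dark_eq by auto
    show "\<alpha> = \<beta>"
    proof
      fix r
      show "\<alpha> r = \<beta> r"
      proof (cases "0 < \<alpha> r \<or> 0 < \<beta> r")
        case True
        then show ?thesis
        proof
          assume "0 < \<alpha> r"
          then have "(r, \<alpha> r) \<in> {(r, \<beta> r) | r. 0 < \<beta> r}" using g by blast
          then show ?thesis by auto
        next
          assume "0 < \<beta> r"
          then have "(r, \<beta> r) \<in> {(r, \<alpha> r) | r. 0 < \<alpha> r}" using g by blast
          then show ?thesis by auto
        qed
      qed auto
    qed
  qed
  have img: "dark ` {\<alpha>. snowy \<alpha>} = rook_diagrams"
  proof
    show "dark ` {\<alpha>. snowy \<alpha>} \<subseteq> rook_diagrams" using dark_eq graph_rook by auto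
    show "rook_diagrams \<subseteq> dark ` {\<alpha>. snowy \<alpha>}"
    proof
      fix R assume R: "R \<in> rook_diagrams"
      then have "dark (rook_to_comp R) = R" using rtc_props dark_eq by simp
      then show "R \<in> dark ` {\<alpha>. snowy \<alpha>}" using rtc_props(1)[OF R] by force
    qed
  qed
  have inv: "\<forall>R\<in>rook_diagrams. the_inv_into {\<alpha>. snowy \<alpha>} dark R = rook_to_comp R"
  proof
    fix R assume R: "R \<in> rook_diagrams"
    then have "dark (rook_to_comp R) = R" using rtc_props dark_eq by simp
    then show "the_inv_into {\<alpha>. snowy \<alpha>} dark R = rook_to_comp R"
      using the_inv_into_f_eq[OF inj _ ] rtc_props(1)[OF R] by (metis mem_Collect_eq)
  qed
  show ?thesis using inj img inv by (simp add: bij_betw_def)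
qed

end
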